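(* Let $1<S\le N$, $L$ a band-width vector, $\dot W$ an $L$-admissible matrix, $W_\varepsilon=\mathrm{Id}+\varepsilon\dot W$, $k\in\mathbb N$, $\beta\in\Gamma$, $D_\beta=D_{k,\beta,L}$, $D_{-\beta}=\overline{D_\beta}=D_\beta^{-1}$, $P_{\varepsilon,\beta}=D_\beta W_\varepsilon$ (so $P_{\varepsilon,\beta}^*=W_\varepsilon D_{-\beta}$). Fix $\ell$ and $s_\ell$ with $\ell\in B_{s_\ell}$. Suppose that for $0<\varepsilon<\gamma$: $f^{(\ell)}_\varepsilon$ is a unit eigenvector of $P_{\varepsilon,\beta}$ with eigenvalue $\lambda^{(\ell)}_\varepsilon\to e^{-2\pi ik\beta_{s_\ell}}$; $\mu^{(\ell)}_\varepsilon$ satisfies $P^*_{\varepsilon,\beta}\mu^{(\ell)}_\varepsilon=\overline{\lambda^{(\ell)}_\varepsilon}\mu^{(\ell)}_\varepsilon$ and $\langle f^{(\ell)}_\varepsilon,\mu^{(\ell)}_\varepsilon\rangle=1$; and $f^{(\ell)}_\varepsilon\to f^{(\ell)}$, $\mu^{(\ell)}_\varepsilon\to f^{(\ell)}$ as $\varepsilon\to0$, where $f^{(\ell)}$ is a unit eigenvector of $D_\beta\hat W_L$. Then for each $j\in\{1,\dots,N\}\setminus B_{s_\ell}$, with $s_j$ such that $j\in B_{s_j}$, $$\lim_{\varepsilon\to0}\frac{(\mu^{(\ell)}_\varepsilon)_j-(f^{(\ell)})_j}{\varepsilon}=\lim_{\varepsilon\to0}\frac{(\mu^{(\ell)}_\varepsilon)_j}{\varepsilon}=\frac{1}{e^{2\pi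 ik\beta_{s_\ell}}-e^{2\pi ik\beta_{s_j}}}\bigl(\dot WD_{-\beta}f^{(\ell)}\bigr)_j.$$
   Context: A band-width vector is $L=(L_1,\dots,L_S)$ of positive integers with $\sum_sL_s=N$; $N_0=0$, $N_s=N_{s-1}+L_s$, $B_s=\{j:N_{s-1}<j\le N_s\}$. $D_{k,\beta,L}$ is the diagonal matrix with $j$-th entry $e^{-2\pi ik\beta_s}$ for $j\in B_s$. $\dot W$ is $L$-admissible if it is real symmetric and (1) $\dot W_{ij}\ge0$ for $i\ne j$, $\sum_j\dot W_{ij}=0$ for all $i$; (2) $\dot W$ has $N$ distinct eigenvalues; (3) each $\hat W_s=(\dot W_{jk})_{j,k\in B_s}$ has $L_s$ distinct eigenvalues. $\hat W_L$ is block diagonal with blocks $\hat W_s$. $\Gamma=\{\beta\in\mathbb R^S: e^{-2\pi ik\beta_{s_1}}\neq e^{-2\pi ik\beta_{s_2}}\text{ for all }k\ne0,\ s_1\ne s_2\}$. $\langle v,w\rangle=\sum_jv_j\overline{w_j}$; $P^*$ is the conjugate transpose. *)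

theory Defs
  imports Complex_Main
begin

text \<open>Vectors are functions nat => complex, matrices nat => nat => complex / real,
  indices range over {1..N} (or a block of it).\<close>

definition Nb :: "(nat \<Rightarrow> nat) \<Rightarrow> nat \<Rightarrow> nat" where
  "Nb L s = (\<Sum>t\<in>{1..s}. L t)"

definition band_block :: "(nat \<Rightarrow> nat) \<Rightarrow> nat \<Rightarrow> nat set" where
  "band_block L s = {j. Nb L (s - 1) < j \<and> j \<le> Nb L s}"

definition band_width_vector :: "nat \<Rightarrow> nat \<Rightarrow> (nat \<Rightarrow> nat) \<Rightarrow> bool" where
  "band_width_vector S N L \<longleftrightarrow> (\<forall>s\<in>{1..S}. 0 < L s) \<and> (\<Sum>s\<in>{1..S}. L s) = N"

definition block_index :: "(nat \<Rightarrow> nat) \<Rightarrow> nat \<Rightarrow> nat \<Rightarrow> nat" where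
  "block_index L S j = (THE s. s \<in> {1..S} \<and> j \<in> band_block L s)"

definition Dmat :: "int \<Rightarrow> (nat \<Rightarrow> real) \<Rightarrow> (nat \<Rightarrow> nat) \<Rightarrow> nat \<Rightarrow> nat \<Rightarrow> nat \<Rightarrow> complex" where
  "Dmat k \<beta> L S i j =
     (if i = j then exp (- 2 * pi * \<i> * of_int k * of_real (\<beta> (block_index L S j))) else 0)"

definition mat_vec :: "nat set \<Rightarrow> (nat \<Rightarrow> nat \<Rightarrow> complex) \<Rightarrow> (nat \<Rightarrow> complex) \<Rightarrow> nat \<Rightarrow> complex" where
  "mat_vec I A v = (\<lambda>i. \<Sum>j\<in>I. A i j * v j)"

definition mat_mul :: "nat set \<Rightarrow> (nat \<Rightarrow> nat \<Rightarrow> complex) \<Rightarrow> (nat \<Rightarrow> nat \<Rightarrow> complex) \<Rightarrow> nat \<Rightarrow> nat \<Rightarrow> complex" where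
  "mat_mul I A B = (\<lambda>i j. \<Sum>m\<in>I. A i m * B m j)"

definition adjoint :: "(nat \<Rightarrow> nat \<Rightarrow> complex) \<Rightarrow> nat \<Rightarrow> nat \<Rightarrow> complex" where
  "adjoint A = (\<lambda>i j. cnj (A j i))"

definition cmat :: "(nat \<Rightarrow> nat \<Rightarrow> real) \<Rightarrow> nat \<Rightarrow> nat \<Rightarrow> complex" where
  "cmat A = (\<lambda>i j. complex_of_real (A i j))"

definition cinner :: "nat set \<Rightarrow> (nat \<Rightarrow> complex) \<Rightarrow> (nat \<Rightarrow> complex) \<Rightarrow> complex" where
  "cinner I v w = (\<Sum>j\<in>I. v j * cnj (w j))"

definition vnorm :: "nat set \<Rightarrow> (nat \<Rightarrow> complex) \<Rightarrow> real" where
  "vnorm I v = sqrt (\<Sum>j\<in>I. (cmod (v j))\<^sup>2)"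

definition mat_eigenvalue :: "nat set \<Rightarrow> (nat \<Rightarrow> nat \<Rightarrow> complex) \<Rightarrow> complex \<Rightarrow> bool" where
  "mat_eigenvalue I A lam \<longleftrightarrow> (\<exists>v. (\<exists>j\<in>I. v j \<noteq> 0) \<and> (\<forall>i\<in>I. mat_vec I A v i = lam * v i))"

definition admissible :: "nat \<Rightarrow> nat \<Rightarrow> (nat \<Rightarrow> nat) \<Rightarrow> (nat \<Rightarrow> nat \<Rightarrow> real) \<Rightarrow> bool" where
  "admissible S N L W \<longleftrightarrow>
     (\<forall>i\<in>{1..N}. \<forall>j\<in>{1..N}. W i j = W j i) \<and>
     (\<forall>i\<in>{1..N}. \<forall>j\<in>{1..N}. i \<noteq> j \<longrightarrow> 0 \<le> W i j) \<and>
     (\<forall>i\<in>{1..N}. (\<Sum>j\<in>{1..N}. W i j) = 0) \<and>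
     card {lam. mat_eigenvalue {1..N} (cmat W) lam} = N \<and>
     (\<forall>s\<in>{1..S}. card {lam. mat_eigenvalue (band_block L s) (cmat W) lam} = L s)"

definition hatW :: "(nat \<Rightarrow> nat) \<Rightarrow> nat \<Rightarrow> (nat \<Rightarrow> nat \<Rightarrow> real) \<Rightarrow> nat \<Rightarrow> nat \<Rightarrow> real" where
  "hatW L S W = (\<lambda>i j. if block_index L S i = block_index L S j then W i j else 0)"

definition Gamma_set :: "nat \<Rightarrow> (nat \<Rightarrow> real) set" where
  "Gamma_set S = {\<beta>. \<forall>k::int. k \<noteq> 0 \<longrightarrow> (\<forall>s1\<in>{1..S}. \<forall>s2\<in>{1..S}. s1 \<noteq> s2 \<longrightarrow>
      exp (- 2 * pi * \<i> * of_int k * of_real (\<beta> s1)) \<noteq> exp (- 2 * pi * \<i> * of_int k * of_real (\<beta> s2)))}"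

definition Weps :: "real \<Rightarrow> (nat \<Rightarrow> nat \<Rightarrow> real) \<Rightarrow> nat \<Rightarrow> nat \<Rightarrow> real" where
  "Weps \<epsilon> W = (\<lambda>i j. (if i = j then 1 else 0) + \<epsilon> * W i j)"

end

theory Submission imports Defs begin

lemma Nb_mono: "a \<le> b \<Longrightarrow> Nb L a \<le> Nb L b"
  unfolding Nb_def by (rule sum_mono2) auto

lemma Nb_0: "Nb L 0 = 0" unfolding Nb_def by simp

lemma block_unique:
  assumes "j \<in> band_block L s" "j \<in> band_block L t"
  shows "s = t"
proof (rule ccontr)
  assume "s \<noteq> t"
  then consider "s < t" | "t < s" by linarith
  then show False
  proof cases
    case 1
    hence "Nb L s \<le> Nb L (t - 1)" by (intro Nb_mono) auto
    then show False using assms unfolding band_block_def by auto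
  next
    case 2
    hence "Nb L t \<le> Nb L (s - 1)" by (intro Nb_mono) auto
    then show False using assms unfolding band_block_def by auto
  qed
qed

lemma block_exists:
  assumes bw: "band_width_vector S N L" and j: "j \<in> {1..N}"
  shows "\<exists>s\<in>{1..S}. j \<in> band_block L s"
proof -
  have NS: "Nb L S = N" using bw unfolding band_width_vector_def Nb_def by simp
  define s where "s = (LEAST s. j \<le> Nb L s)"
  have ex: "j \<le> Nb L S" using NS j by simp
  have s1: "j \<le> Nb L s" unfolding s_def by (rule LeastI[of _ S]) (rule ex)
  have s2: "s \<le> S" unfolding s_def by (rule Least_le) (rule ex)
  have s0: "s \<noteq> 0" using s1 j Nb_0[of L] by (cases "s = 0") auto
  have s3: "\<not> j \<le> Nb L (s - 1)"
  proof
    assume "j \<le> Nb L (s - 1)"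
    hence "s \<le> s - 1" unfolding s_def by (rule Least_le)
    thus False using s0 by simp
  qed
  show ?thesis using s0 s1 s2 s3 by (auto simp: band_block_def intro!: bexI[of _ s])
qed

lemma block_index_prop:
  assumes bw: "band_width_vector S N L" and j: "j \<in> {1..N}"
  shows "block_index L S j \<in> {1..S} \<and> j \<in> band_block L (block_index L S j)"
proof -
  obtain s where s: "s \<in> {1..S}" "j \<in> band_block L s" using block_exists[OF bw j] by blast
  have "block_index L S j = s" unfolding block_index_def
    by (rule the_equality) (use s block_unique in auto)
  thus ?thesis using s by simp
qed

lemma diag_mul:
  assumes "finite I" "i \<in> I"
  shows "mat_mul I (Dmat k \<beta> L S) B i j = Dmat k \<beta> L S i i * B i j"
proof -
  have "mat_mul I (Dmat k \<beta> L S) B i j = (\<Sum>m\<in>I. if m = i then Dmat k \<beta> L S i i * B i j else 0)"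
    unfolding mat_mul_def by (intro sum.cong) (auto simp: Dmat_def)
  also have "\<dots> = Dmat k \<beta> L S i i * B i j" using assms by simp
  finally show ?thesis .
qed

lemma cnj_exp_neg: "cnj (exp (- 2 * pi * \<i> * of_int k * of_real x)) = exp (2 * pi * \<i> * of_int k * of_real x)"
proof -
  have a: "- 2 * pi * \<i> * of_int k * of_real x = \<i> * complex_of_real (- 2 * pi * k * x)" by simp
  have b: "2 * pi * \<i> * of_int k * of_real x = \<i> * complex_of_real (2 * pi * k * x)" by simp
  show ?thesis unfolding a b cis_conv_exp[symmetric] cis_cnj by simp
qed


theorem proposition4p9:
  fixes S N :: nat and L :: "nat \<Rightarrow> nat" and W :: "nat \<Rightarrow> nat \<Rightarrow> real"
    and k :: nat and \<beta> :: "nat \<Rightarrow> real" and \<gamma> :: real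
    and l sl :: nat
    and f\<epsilon> \<mu>\<epsilon> :: "real \<Rightarrow> nat \<Rightarrow> complex" and lamE :: "real \<Rightarrow> complex"
    and f :: "nat \<Rightarrow> complex"
  defines "I \<equiv> {1..N}"
  defines "D \<equiv> Dmat (int k) \<beta> L S"
  defines "P \<equiv> (\<lambda>\<epsilon>. mat_mul I D (cmat (Weps \<epsilon> W)))"
  assumes S_gt1: "1 < S" and S_le: "S \<le> N"
    and bw: "band_width_vector S N L"
    and adm: "admissible S N L W"
    and k_pos: "0 < k"
    and beta: "\<beta> \<in> Gamma_set S"
    and gamma: "0 < \<gamma>"
    and sl: "sl \<in> {1..S}" and l_in: "l \<in> band_block L sl"
    and f_eig: "\<And>\<epsilon>. 0 < \<epsilon> \<Longrightarrow> \<epsilon> < \<gamma> \<Longrightarrow>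
        vnorm I (f\<epsilon> \<epsilon>) = 1 \<and> (\<forall>i\<in>I. mat_vec I (P \<epsilon>) (f\<epsilon> \<epsilon>) i = lamE \<epsilon> * f\<epsilon> \<epsilon> i)"
    and lam_lim: "(lamE \<longlongrightarrow> exp (- 2 * pi * \<i> * of_nat k * of_real (\<beta> sl))) (at_right 0)"
    and mu_eig: "\<And>\<epsilon>. 0 < \<epsilon> \<Longrightarrow> \<epsilon> < \<gamma> \<Longrightarrow>
        (\<forall>i\<in>I. mat_vec I (adjoint (P \<epsilon>)) (\<mu>\<epsilon> \<epsilon>) i = cnj (lamE \<epsilon>) * \<mu>\<epsilon> \<epsilon> i)
        \<and> cinner I (f\<epsilon> \<epsilon>) (\<mu>\<epsilon> \<epsilon>) = 1"
    and f_lim: "\<And>j. j \<in> I \<Longrightarrow> ((\<lambda>\<epsilon>. f\<epsilon> \<epsilon> j) \<longlongrightarrow> f j) (at_right 0)"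
    and mu_lim: "\<And>j. j \<in> I \<Longrightarrow> ((\<lambda>\<epsilon>. \<mu>\<epsilon> \<epsilon> j) \<longlongrightarrow> f j) (at_right 0)"
    and f_unit: "vnorm I f = 1"
    and f_eigv: "\<exists>lam. \<forall>i\<in>I. mat_vec I (mat_mul I D (cmat (hatW L S W))) f i = lam * f i"
  shows "\<forall>j\<in>I - band_block L sl.
     (let c = 1 / (exp (2 * pi * \<i> * of_nat k * of_real (\<beta> sl))
                    - exp (2 * pi * \<i> * of_nat k * of_real (\<beta> (block_index L S j))))
              * mat_vec I (mat_mul I (cmat W) (\<lambda>a b. cnj (D a b))) f j
      in ((\<lambda>\<epsilon>. (\<mu>\<epsilon> \<epsilon> j - f j) / of_real \<epsilon>) \<longlongrightarrow> c) (at_right 0)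
       \<and> ((\<lambda>\<epsilon>. \<mu>\<epsilon> \<epsilon> j / of_real \<epsilon>) \<longlongrightarrow> c) (at_right 0))"
proof
  fix j assume j: "j \<in> I - band_block L sl"
  have fin: "finite I" unfolding I_def by simp
  have jI: "j \<in> {1..N}" using j unfolding I_def by simp
  define sj where "sj = block_index L S j"
  have sj: "sj \<in> {1..S}" "j \<in> band_block L sj" using block_index_prop[OF bw jI] unfolding sj_def by auto
  have sjl: "sj \<noteq> sl" using sj j by auto
  define e where "e t = exp (2 * pi * \<i> * of_nat k * of_real (\<beta> t))" for t
  have ne: "e sl \<noteq> e sj"
  proof -
    have kne: "- int k \<noteq> 0" using k_pos by simp
    have "exp (- 2 * pi * \<i> * of_int (- int k) * of_real (\<beta> sl)) \<noteq>
        exp (- 2 * pi * \<i> * of_int (- int k) * of_real (\<beta> sj))"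
      by (rule beta[unfolded Gamma_set_def mem_Collect_eq, rule_format, OF kne sl sj(1) sjl[symmetric]])
    thus ?thesis unfolding e_def by simp
  qed
  define cD where "cD b = cnj (D b b)" for b
  have cD: "cD b = e (block_index L S b)" for b
    unfolding cD_def D_def Dmat_def e_def using cnj_exp_neg[of "int k"] by simp
  define A where "A \<epsilon> = (\<Sum>b\<in>I. cmat W j b * cD b * \<mu>\<epsilon> \<epsilon> b)" for \<epsilon>
  define A0 where "A0 = (\<Sum>b\<in>I. cmat W j b * cD b * f b)"
  have A0: "mat_vec I (mat_mul I (cmat W) (\<lambda>a b. cnj (D a b))) f j = A0"
  proof -
    have "mat_mul I (cmat W) (\<lambda>a b. cnj (D a b)) j b = cmat W j b * cD b" if "b \<in> I" for b
    proof -
      have "mat_mul I (cmat W) (\<lambda>a b. cnj (D a b)) j b = (\<Sum>m\<in>I. if m = b then cmat W j b * cD b else 0)"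
        unfolding mat_mul_def by (intro sum.cong) (auto simp: D_def Dmat_def cD_def)
      also have "\<dots> = cmat W j b * cD b" using fin that by simp
      finally show ?thesis .
    qed
    thus ?thesis unfolding mat_vec_def A0_def by (intro sum.cong) auto
  qed
  have key: "(cnj (lamE \<epsilon>) - cD j) * \<mu>\<epsilon> \<epsilon> j = of_real \<epsilon> * A \<epsilon>" if "0 < \<epsilon>" "\<epsilon> < \<gamma>" for \<epsilon>
  proof -
    have adj: "adjoint (P \<epsilon>) j b = cD b * ((if b = j then 1 else 0) + of_real \<epsilon> * cmat W j b)" if "b \<in> I" for b
    proof -
      have "P \<epsilon> b j = D b b * cmat (Weps \<epsilon> W) b j" unfolding P_def D_def using diag_mul[OF fin that] .
      moreover have "W b j = W j b" using adm that j unfolding admissible_def I_def by auto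
      ultimately show ?thesis unfolding adjoint_def cD_def cmat_def Weps_def by auto
    qed
    have "mat_vec I (adjoint (P \<epsilon>)) (\<mu>\<epsilon> \<epsilon>) j
        = (\<Sum>b\<in>I. (if b = j then cD j * \<mu>\<epsilon> \<epsilon> j else 0) + of_real \<epsilon> * (cmat W j b * cD b * \<mu>\<epsilon> \<epsilon> b))"
      unfolding mat_vec_def by (intro sum.cong) (auto simp: adj algebra_simps)
    also have "\<dots> = cD j * \<mu>\<epsilon> \<epsilon> j + of_real \<epsilon> * A \<epsilon>"
      unfolding A_def using fin j by (simp add: sum.distrib sum_distrib_left)
    finally have "cD j * \<mu>\<epsilon> \<epsilon> j + of_real \<epsilon> * A \<epsilon> = cnj (lamE \<epsilon>) * \<mu>\<epsilon> \<epsilon> j"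
      using mu_eig[OF that] j by auto
    thus ?thesis by (simp add: algebra_simps)
  qed
  have limA: "(A \<longlongrightarrow> A0) (at_right 0)"
    unfolding A_def A0_def by (intro tendsto_intros mu_lim) auto
  have limden: "((\<lambda>\<epsilon>. cnj (lamE \<epsilon>) - cD j) \<longlongrightarrow> e sl - e sj) (at_right 0)"
  proof -
    have "cnj (exp (- 2 * pi * \<i> * of_nat k * of_real (\<beta> sl))) = e sl"
      using cnj_exp_neg[of "int k" "\<beta> sl"] unfolding e_def by simp
    moreover have "cD j = e sj" using cD unfolding sj_def by simp
    ultimately show ?thesis using tendsto_cnj[OF lam_lim] by (auto intro: tendsto_diff)
  qed
  have evne: "\<forall>\<^sub>F \<epsilon> in at_right 0. cnj (lamE \<epsilon>) - cD j \<noteq> 0"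
    using tendsto_imp_eventually_ne[OF limden, of 0] ne by simp
  have evg: "\<forall>\<^sub>F \<epsilon> in at_right 0. 0 < \<epsilon> \<and> \<epsilon> < (\<gamma>::real)"
    using eventually_at_right_real[OF gamma] by simp
  define c where "c = 1 / (exp (2 * pi * \<i> * of_nat k * of_real (\<beta> sl))
                    - exp (2 * pi * \<i> * of_nat k * of_real (\<beta> (block_index L S j))))
              * mat_vec I (mat_mul I (cmat W) (\<lambda>a b. cnj (D a b))) f j"
  have c: "c = A0 / (e sl - e sj)" unfolding c_def A0 e_def sj_def by simp
  have lim2: "((\<lambda>\<epsilon>. \<mu>\<epsilon> \<epsilon> j / of_real \<epsilon>) \<longlongrightarrow> c) (at_right 0)"
  proof -
    have "((\<lambda>\<epsilon>. A \<epsilon> / (cnj (lamE \<epsilon>) - cD j)) \<longlongrightarrow> c) (at_right 0)"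
      unfolding c using ne by (intro tendsto_divide limA limden) auto
    moreover have "\<forall>\<^sub>F \<epsilon> in at_right 0. A \<epsilon> / (cnj (lamE \<epsilon>) - cD j) = \<mu>\<epsilon> \<epsilon> j / of_real \<epsilon>"
      using evne evg
    proof eventually_elim
      case (elim \<epsilon>)
      then show ?case using key[of \<epsilon>] by (simp add: field_simps)
    qed
    ultimately show ?thesis by (rule Lim_transform_eventually)
  qed
  have fj: "f j = 0"
  proof -
    have "((\<lambda>\<epsilon>. of_real \<epsilon> * (\<mu>\<epsilon> \<epsilon> j / of_real \<epsilon>)) \<longlongrightarrow> of_real 0 * c) (at_right (0::real))"
      by (intro tendsto_mult lim2 tendsto_of_real) (simp add: tendsto_ident_at)
    moreover have "\<forall>\<^sub>F \<epsilon> in at_right 0. of_real \<epsilon> * (\<mu>\<epsilon> \<epsilon> j / of_real \<epsilon>) = \<mu>\<epsilon> \<epsilon> j"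
      using evg by eventually_elim simp
    ultimately have "((\<lambda>\<epsilon>. \<mu>\<epsilon> \<epsilon> j) \<longlongrightarrow> 0) (at_right (0::real))"
      by (simp add: Lim_transform_eventually)
    moreover have "((\<lambda>\<epsilon>. \<mu>\<epsilon> \<epsilon> j) \<longlongrightarrow> f j) (at_right (0::real))" using mu_lim j by simp
    ultimately show ?thesis using tendsto_unique[OF trivial_limit_at_right_real] by metis
  qed
  show "let c = 1 / (exp (2 * pi * \<i> * of_nat k * of_real (\<beta> sl))
                    - exp (2 * pi * \<i> * of_nat k * of_real (\<beta> (block_index L S j))))
              * mat_vec I (mat_mul I (cmat W) (\<lambda>a b. cnj (D a b))) f j
      in ((\<lambda>\<epsilon>. (\<mu>\<epsilon> \<epsilon> j - f j) / of_real \<epsilon>) \<longlongrightarrow> c) (at_right 0)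
       \<and> ((\<lambda>\<epsilon>. \<mu>\<epsilon> \<epsilon> j / of_real \<epsilon>) \<longlongrightarrow> c) (at_right 0)"
    unfolding Let_def c_def[symmetric] using lim2 fj by simp
qed

end
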